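(* Let $\mathcal{K}^2_*$ denote the set of strictly convex bodies in $\mathbb{R}^2$, with the Hausdorff metric. The map $K\mapsto \mathcal{M}_K$ from $\mathcal{K}^2_*$ to the space of nonempty compact subsets of $\mathbb{R}^2$ (with the Hausdorff metric) is continuous.
   Context: A convex body is a nonempty compact convex subset of $\mathbb{R}^2$; it is strictly convex if its boundary contains no nondegenerate segment. For $K$ strictly convex and $u\in\mathbb{S}^1$, $x_K(u)$ denotes the unique point of $K$ on its supporting line with outer unit normal $u$, and $m_K(u)=\frac12[x_K(u)+x_K(-u)]$. The middle hedgehog is $\mathcal{M}_K=\{m_K(u): u\in\mathbb{S}^1\}$. *)

theory Defs
  imports "HOL-Analysis.Analysis"
begin

definition hausdorff_dist :: "'a::metric_space set \<Rightarrow> 'a set \<Rightarrow> real" where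
  "hausdorff_dist A B = max (SUP a\<in>A. infdist a B) (SUP b\<in>B. infdist b A)"

definition convex_body :: "(real^2) set \<Rightarrow> bool" where
  "convex_body K \<longleftrightarrow> K \<noteq> {} \<and> compact K \<and> convex K"

definition strictly_convex_body :: "(real^2) set \<Rightarrow> bool" where
  "strictly_convex_body K \<longleftrightarrow> convex_body K \<and>
     (\<forall>a b. a \<noteq> b \<longrightarrow> \<not> closed_segment a b \<subseteq> frontier K)"

text \<open>x_K(u): the (unique, for strictly convex K) point of K on its supporting line
  with outer unit normal u.\<close>
definition support_point :: "(real^2) set \<Rightarrow> real^2 \<Rightarrow> real^2" where
  "support_point K u = (THE x. x \<in> K \<and> (\<forall>y\<in>K. y \<bullet> u \<le> x \<bullet> u))"

definition mid_point :: "(real^2) set \<Rightarrow> real^2 \<Rightarrow> real^2" where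
  "mid_point K u = (1/2) *\<^sub>R (support_point K u + support_point K (- u))"

definition middle_hedgehog :: "(real^2) set \<Rightarrow> (real^2) set" where
  "middle_hedgehog K = mid_point K ` sphere 0 1"

end

theory Submission
  imports Defs
begin

lemma max_frontier:
  fixes K :: "(real^2) set"
  assumes "compact K" "u \<noteq> 0" "z \<in> K" "\<forall>y\<in>K. y \<bullet> u \<le> z \<bullet> u"
  shows "z \<in> frontier K"
proof -
  have "z \<notin> interior K"
  proof
    assume "z \<in> interior K"
    then obtain r where r: "r > 0" "ball z r \<subseteq> K" using mem_interior by blast
    define w where "w = z + (r/2 / norm u) *\<^sub>R u"
    have "dist z w < r" using r assms(2) by (simp add: w_def dist_norm)
    hence "w \<in> K" using r by auto
    hence "w \<bullet> u \<le> z \<bullet> u" using assms(4) by auto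
    moreover have "w \<bullet> u = z \<bullet> u + (r/2/norm u) * (u \<bullet> u)"
      by (simp add: w_def inner_add_left)
    moreover have "u \<bullet> u > 0" using assms(2) by simp
    moreover have "r/2/norm u > 0" using r assms(2) by simp
    ultimately show False by (smt (verit) mult_pos_pos)
  qed
  moreover have "closed K" using assms(1) compact_imp_closed by auto
  ultimately show ?thesis using assms(3) by (simp add: frontier_def closure_closed)
qed

lemma max_unique:
  fixes K :: "(real^2) set"
  assumes K: "strictly_convex_body K" and u: "u \<noteq> 0"
    and x: "x \<in> K" "\<forall>y\<in>K. y \<bullet> u \<le> x \<bullet> u"
    and y: "y \<in> K" "\<forall>z\<in>K. z \<bullet> u \<le> y \<bullet> u"
  shows "x = y"
proof (rule ccontr)
  assume ne: "x \<noteq> y"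
  have cb: "compact K" "convex K" using K by (auto simp: strictly_convex_body_def convex_body_def)
  have eq: "x \<bullet> u = y \<bullet> u" using x y by force
  have "closed_segment x y \<subseteq> frontier K"
  proof
    fix z assume z: "z \<in> closed_segment x y"
    then obtain t where t: "0 \<le> t" "t \<le> 1" "z = (1 - t) *\<^sub>R x + t *\<^sub>R y"
      by (auto simp: closed_segment_def)
    have zK: "z \<in> K" using z cb(2) x(1) y(1) by (meson closed_segment_subset subsetD)
    have "z \<bullet> u = (1 - t) * (x \<bullet> u) + t * (y \<bullet> u)" by (simp add: t(3) inner_add_left)
    also have "\<dots> = x \<bullet> u" using eq by (simp add: algebra_simps)
    finally have "\<forall>w\<in>K. w \<bullet> u \<le> z \<bullet> u" using x by simp
    thus "z \<in> frontier K" using max_frontier[OF cb(1) u zK] by simp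
  qed
  thus False using K ne by (auto simp: strictly_convex_body_def)
qed

lemma supp:
  fixes K :: "(real^2) set"
  assumes K: "strictly_convex_body K" and u: "u \<noteq> 0"
  shows "support_point K u \<in> K \<and> (\<forall>y\<in>K. y \<bullet> u \<le> support_point K u \<bullet> u)"
proof -
  have cb: "compact K" "K \<noteq> {}" using K by (auto simp: strictly_convex_body_def convex_body_def)
  have "continuous_on K (\<lambda>y. y \<bullet> u)" by (intro continuous_intros)
  then obtain x where x: "x \<in> K" "\<forall>y\<in>K. y \<bullet> u \<le> x \<bullet> u"
    using continuous_attains_sup[OF cb] by blast
  have "\<exists>!x. x \<in> K \<and> (\<forall>y\<in>K. y \<bullet> u \<le> x \<bullet> u)"
    using x max_unique[OF K u] by blast
  from theI'[OF this] show ?thesis unfolding support_point_def .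
qed

lemma hd_close:
  fixes A B :: "'a::heine_borel set"
  assumes "bounded A" "compact B" "B \<noteq> {}" "hausdorff_dist A B < d" "a \<in> A"
  shows "\<exists>b\<in>B. dist a b < d"
proof -
  obtain b0 where b0: "b0 \<in> B" using assms(3) by auto
  obtain R where R: "\<forall>x\<in>A. dist b0 x \<le> R" using assms(1) bounded_any_center by metis
  have "bdd_above ((\<lambda>x. infdist x B) ` A)"
  proof (rule bdd_aboveI2)
    fix x assume "x \<in> A"
    hence "dist x b0 \<le> R" using R by (metis dist_commute)
    thus "infdist x B \<le> R" using infdist_le[OF b0, of x] by linarith
  qed
  hence "infdist a B \<le> (SUP x\<in>A. infdist x B)" using assms(5) by (rule cSUP_upper2) simp
  hence "infdist a B < d" using assms(4) unfolding hausdorff_dist_def by linarith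
  moreover obtain b where "b \<in> B" "infdist a B = dist a b"
    using infdist_attains_inf[OF compact_imp_closed[OF assms(2)] assms(3)] by blast
  ultimately show ?thesis by auto
qed

lemma hd_le:
  assumes "\<forall>u\<in>S. dist (f u) (g u) \<le> c" "S \<noteq> {}"
  shows "hausdorff_dist (f ` S) (g ` S) \<le> c"
proof -
  have 1: "(SUP a\<in>f ` S. infdist a (g ` S)) \<le> c"
  proof (rule cSUP_least)
    show "f ` S \<noteq> {}" using assms(2) by simp
    fix a assume "a \<in> f ` S"
    then obtain u where u: "u \<in> S" "a = f u" by auto
    have "infdist a (g ` S) \<le> dist (f u) (g u)" using u by (simp add: infdist_le)
    thus "infdist a (g ` S) \<le> c" using assms(1) u by force
  qed
  have 2: "(SUP a\<in>g ` S. infdist a (f ` S)) \<le> c"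
  proof (rule cSUP_least)
    show "g ` S \<noteq> {}" using assms(2) by simp
    fix a assume "a \<in> g ` S"
    then obtain u where u: "u \<in> S" "a = g u" by auto
    have "infdist a (f ` S) \<le> dist (g u) (f u)" using u by (simp add: infdist_le)
    thus "infdist a (f ` S) \<le> c" using assms(1) u by (force simp: dist_commute)
  qed
  show ?thesis using 1 2 unfolding hausdorff_dist_def by simp
qed

lemma hd_self: "K \<noteq> {} \<Longrightarrow> hausdorff_dist K K \<le> 0"
  using hd_le[of K "\<lambda>x. x" "\<lambda>x. x" 0] by simp

lemma midpt_dist:
  fixes a b c d :: "'a::real_normed_vector"
  shows "dist ((1/2) *\<^sub>R (a + b)) ((1/2) *\<^sub>R (c + d)) \<le> (dist a c + dist b d) / 2"
proof -
  have "(1/2) *\<^sub>R (a + b) - (1/2) *\<^sub>R (c + d) = (1/2) *\<^sub>R ((a - c) + (b - d))"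
    by (simp add: algebra_simps)
  hence "dist ((1/2) *\<^sub>R (a + b)) ((1/2) *\<^sub>R (c + d)) = norm ((a - c) + (b - d)) / 2"
    by (simp add: dist_norm)
  also have "\<dots> \<le> (norm (a - c) + norm (b - d)) / 2"
    using norm_triangle_ineq[of "a - c" "b - d"] by simp
  finally show ?thesis by (simp add: dist_norm)
qed

lemma lemmaA:
  fixes K :: "(real^2) set"
  assumes K: "strictly_convex_body K" and u: "u \<in> sphere 0 1" and e: "e > 0"
  shows "\<exists>d>0. \<forall>v\<in>sphere 0 1. \<forall>L. strictly_convex_body L \<and> dist v u < d \<and>
            hausdorff_dist K L < d \<longrightarrow> dist (support_point L v) (support_point K u) < e"
proof -
  have u0: "u \<noteq> 0" using u by auto
  have nu: "norm u = 1" using u by simp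
  define p where "p = support_point K u"
  have p: "p \<in> K" "\<forall>y\<in>K. y \<bullet> u \<le> p \<bullet> u" using supp[OF K u0] by (auto simp: p_def)
  have cb: "compact K" "K \<noteq> {}" using K by (auto simp: strictly_convex_body_def convex_body_def)
  obtain \<eta> where eta: "\<eta> > 0" "\<forall>y\<in>K. dist y p \<ge> e/2 \<longrightarrow> y \<bullet> u \<le> p \<bullet> u - \<eta>"
  proof (cases "K - ball p (e/2) = {}")
    case True
    show ?thesis by (rule that[of 1]) (use True in \<open>auto simp: dist_commute\<close>)
  next
    case False
    have "compact (K - ball p (e/2))" using cb(1) by (simp add: compact_diff)
    moreover have "continuous_on (K - ball p (e/2)) (\<lambda>y. y \<bullet> u)" by (intro continuous_intros)
    ultimately obtain c where c: "c \<in> K - ball p (e/2)" "\<forall>y\<in>K - ball p (e/2). y \<bullet> u \<le> c \<bullet> u"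
      using continuous_attains_sup[OF _ False] by blast
    have "c \<bullet> u < p \<bullet> u"
    proof (rule ccontr)
      assume "\<not> c \<bullet> u < p \<bullet> u"
      hence "\<forall>y\<in>K. y \<bullet> u \<le> c \<bullet> u" using p(2) by force
      hence "c = p" using max_unique[OF K u0 _ _ p] c(1) by blast
      thus False using c(1) e by simp
    qed
    show ?thesis
      by (rule that[of "p \<bullet> u - c \<bullet> u"]) (use \<open>c \<bullet> u < p \<bullet> u\<close> c in \<open>auto simp: dist_commute\<close>)
  qed
  obtain R where R: "R \<ge> 0" "\<forall>y\<in>K. norm y \<le> R"
    using compact_imp_bounded[OF cb(1)] bounded_pos by (metis less_imp_le)
  define d where "d = min (min 1 (e/2)) (\<eta> / (2*R+4))"
  have d: "d > 0" "d \<le> 1" "d \<le> e/2" "d \<le> \<eta> / (2*R+4)"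
    using e eta R unfolding d_def by (simp_all only: min_le_iff_disj order_refl disj_commute) simp_all
  have d2: "(2*R+3) * d \<le> \<eta>"
  proof -
    have "(2*R+4) * d \<le> \<eta>" using d(4) R(1) by (simp add: field_simps)
    thus ?thesis using d(1) by (simp add: algebra_simps)
  qed
  show ?thesis
  proof (intro exI[of _ d] conjI d(1) ballI allI impI)
    fix v L assume v: "v \<in> sphere 0 (1::real)"
      and H: "strictly_convex_body L \<and> dist v u < d \<and> hausdorff_dist K L < d"
    have L: "strictly_convex_body L" and vu: "dist v u < d" and hd: "hausdorff_dist K L < d"
      using H by auto
    have cL: "compact L" "L \<noteq> {}" using L by (auto simp: strictly_convex_body_def convex_body_def)
    have v0: "v \<noteq> 0" using v by auto
    define q where "q = support_point L v"
    have q: "q \<in> L" "\<forall>y\<in>L. y \<bullet> v \<le> q \<bullet> v" using supp[OF L v0] by (auto simp: q_def)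
    have hd': "hausdorff_dist L K < d" using hd by (simp add: hausdorff_dist_def max.commute)
    obtain l where l: "l \<in> L" "dist p l < d"
      using hd_close[OF compact_imp_bounded[OF cb(1)] cL hd p(1)] by blast
    obtain k where k: "k \<in> K" "dist q k < d"
      using hd_close[OF compact_imp_bounded[OF cL(1)] cb hd' q(1)] by blast
    have nk: "norm k \<le> R" using R k by auto
    have nq: "norm q \<le> R + 1"
      using nk k(2) d(2) norm_triangle_ineq[of "q - k" k] by (simp add: dist_norm)
    have np: "norm p \<le> R" using R p by auto
    have nuv: "norm (u - v) < d" using vu by (simp add: dist_norm norm_minus_commute)
    have s1: "k \<bullet> u > q \<bullet> u - d"
    proof -
      have "\<bar>(k - q) \<bullet> u\<bar> \<le> norm (k - q) * norm u" by (rule Cauchy_Schwarz_ineq2)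
      hence "\<bar>(k - q) \<bullet> u\<bar> < d" using k(2) nu by (simp add: dist_norm norm_minus_commute)
      thus ?thesis by (simp add: inner_diff_left)
    qed
    have s2: "q \<bullet> u \<ge> q \<bullet> v - (R+1) * d"
    proof -
      have "\<bar>q \<bullet> (u - v)\<bar> \<le> norm q * norm (u - v)" by (rule Cauchy_Schwarz_ineq2)
      also have "\<dots> \<le> (R+1) * d" using nq nuv R(1) by (intro mult_mono) auto
      finally show ?thesis by (simp add: inner_diff_right)
    qed
    have s3: "q \<bullet> v \<ge> l \<bullet> v" using q l by auto
    have s4: "l \<bullet> v \<ge> p \<bullet> v - d"
    proof -
      have "\<bar>(l - p) \<bullet> v\<bar> \<le> norm (l - p) * norm v" by (rule Cauchy_Schwarz_ineq2)
      hence "\<bar>(l - p) \<bullet> v\<bar> < d" using l(2) v by (simp add: dist_norm norm_minus_commute)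
      thus ?thesis by (simp add: inner_diff_left)
    qed
    have s5: "p \<bullet> v \<ge> p \<bullet> u - R * d"
    proof -
      have "\<bar>p \<bullet> (u - v)\<bar> \<le> norm p * norm (u - v)" by (rule Cauchy_Schwarz_ineq2)
      also have "\<dots> \<le> R * d" using np nuv R(1) by (intro mult_mono) auto
      finally show ?thesis by (simp add: inner_diff_right)
    qed
    have "k \<bullet> u > p \<bullet> u - (2*R+3) * d" using s1 s2 s3 s4 s5 by (simp add: algebra_simps)
    hence "k \<bullet> u > p \<bullet> u - \<eta>" using d2 by linarith
    hence "dist k p < e/2" using eta(2) k(1) by force
    hence "dist q p < e/2 + d" using k(2) dist_triangle[of q p k] by linarith
    thus "dist (support_point L v) (support_point K u) < e" using d(3) by (simp add: q_def p_def)
  qed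
qed

lemma scb_ne: "strictly_convex_body K \<Longrightarrow> K \<noteq> {}"
  by (simp add: strictly_convex_body_def convex_body_def)

lemma lemmaB:
  fixes K :: "(real^2) set"
  assumes K: "strictly_convex_body K" and e: "e > 0"
  shows "\<exists>d>0. \<forall>L. strictly_convex_body L \<and> hausdorff_dist K L < d \<longrightarrow>
            (\<forall>v\<in>sphere 0 1. dist (support_point L v) (support_point K v) < e)"
proof -
  define P where "P = (\<lambda>u d. d > 0 \<and> (\<forall>v\<in>sphere 0 1. \<forall>L. strictly_convex_body L \<and> dist v u < d \<and>
            hausdorff_dist K L < d \<longrightarrow> dist (support_point L v) (support_point K u) < e/2))"
  have ex: "\<forall>u\<in>sphere 0 1. \<exists>d. P u d"
  proof
    fix u :: "real^2" assume u: "u \<in> sphere 0 1"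
    show "\<exists>d. P u d" using lemmaA[OF K u, of "e/2"] e unfolding P_def by (metis half_gt_zero)
  qed
  obtain D where PD: "\<forall>u\<in>sphere 0 1. P u (D u)" using bchoice[OF ex] by blast
  have D: "D u > 0 \<and> (\<forall>v\<in>sphere 0 1. \<forall>L. strictly_convex_body L \<and> dist v u < D u \<and>
            hausdorff_dist K L < D u \<longrightarrow> dist (support_point L v) (support_point K u) < e/2)"
    if "u \<in> sphere 0 1" for u
    using PD that unfolding P_def by blast
  have "sphere (0::real^2) 1 \<subseteq> (\<Union>u\<in>sphere 0 1. ball u (D u / 2))"
  proof
    fix x :: "real^2" assume x: "x \<in> sphere 0 1"
    have "x \<in> ball x (D x / 2)" using D[OF x] by simp
    thus "x \<in> (\<Union>u\<in>sphere 0 1. ball u (D u / 2))" using x by blast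
  qed
  then obtain T where T: "T \<subseteq> sphere 0 1" "finite T" "sphere (0::real^2) 1 \<subseteq> (\<Union>u\<in>T. ball u (D u / 2))"
  proof -
    assume cov: "sphere (0::real^2) 1 \<subseteq> (\<Union>u\<in>sphere 0 1. ball u (D u / 2))"
    assume th: "\<And>T. T \<subseteq> sphere 0 1 \<Longrightarrow> finite T \<Longrightarrow> sphere (0::real^2) 1 \<subseteq> (\<Union>u\<in>T. ball u (D u / 2)) \<Longrightarrow> thesis"
    have op: "\<And>T. T \<in> sphere (0::real^2) 1 \<Longrightarrow> open (ball T (D T / 2))" by simp
    show thesis using compactE_image[OF compact_sphere op cov] th by blast
  qed
  have "sphere (0::real^2) 1 \<noteq> {}" by simp
  hence Tne: "T \<noteq> {}" using T(3) by auto
  define d where "d = Min ((\<lambda>u. D u / 2) ` T)"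
  have dpos: "d > 0" unfolding d_def
  proof (subst Min_gr_iff)
    show "finite ((\<lambda>u. D u / 2) ` T)" using T(2) by simp
    show "(\<lambda>u. D u / 2) ` T \<noteq> {}" using Tne by simp
    show "\<forall>a\<in>(\<lambda>u. D u / 2) ` T. 0 < a" using T(1) D by auto
  qed
  have dle: "\<And>u. u \<in> T \<Longrightarrow> d \<le> D u / 2" unfolding d_def using T(2) by (intro Min_le) auto
  have hdK: "hausdorff_dist K K < D u" if "u \<in> T" for u
  proof -
    have "u \<in> sphere 0 1" using T(1) that by auto
    hence "D u > 0" using D by blast
    thus ?thesis using hd_self[OF scb_ne[OF K]] by linarith
  qed
  show ?thesis
  proof (intro exI[of _ d] conjI dpos allI impI ballI)
    fix L v assume H: "strictly_convex_body L \<and> hausdorff_dist K L < d" and v: "v \<in> sphere (0::real^2) 1"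
    obtain u where u: "u \<in> T" "dist u v < D u / 2" using T(3) v by auto
    have uS: "u \<in> sphere 0 1" using u T by auto
    have Du: "D u > 0" using D[OF uS] by simp
    have vu: "dist v u < D u" using u Du by (simp add: dist_commute)
    have 1: "dist (support_point L v) (support_point K u) < e/2"
    proof -
      have "hausdorff_dist K L < D u" using H dle[OF u(1)] Du by linarith
      thus ?thesis using D[OF uS] v H vu by blast
    qed
    have 2: "dist (support_point K v) (support_point K u) < e/2"
      using D[OF uS] v K vu hdK[OF u(1)] by blast
    show "dist (support_point L v) (support_point K v) < e"
      using 1 2 dist_triangle3[of "support_point L v" "support_point K v" "support_point K u"]
      by (simp add: dist_commute)
  qed
qed

lemma supp_cont:
  fixes K :: "(real^2) set"
  assumes K: "strictly_convex_body K"
  shows "continuous_on (sphere 0 1) (support_point K)"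
  unfolding continuous_on_iff
proof (intro ballI allI impI)
  fix u e assume u: "u \<in> sphere (0::real^2) 1" and e: "(e::real) > 0"
  obtain d where d: "d > 0" "\<forall>v\<in>sphere 0 1. \<forall>L. strictly_convex_body L \<and> dist v u < d \<and>
            hausdorff_dist K L < d \<longrightarrow> dist (support_point L v) (support_point K u) < e"
    using lemmaA[OF K u e] by blast
  have "hausdorff_dist K K < d" using hd_self[OF scb_ne[OF K]] d(1) by linarith
  thus "\<exists>d>0. \<forall>x'\<in>sphere 0 1. dist x' u < d \<longrightarrow> dist (support_point K x') (support_point K u) < e"
    using d K by blast
qed

lemma mid_cont:
  fixes K :: "(real^2) set"
  assumes K: "strictly_convex_body K"
  shows "continuous_on (sphere 0 1) (mid_point K)"
proof -
  have c1: "continuous_on (sphere 0 1) (support_point K)" by (rule supp_cont[OF K])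
  have "continuous_on (sphere 0 1) (\<lambda>u. support_point K (- u))"
    by (rule continuous_on_compose2[OF c1]) (auto intro: continuous_intros)
  with c1 show ?thesis unfolding mid_point_def by (intro continuous_intros)
qed

theorem mainTheorem3:
  shows "(\<forall>K. strictly_convex_body K \<longrightarrow>
            middle_hedgehog K \<noteq> {} \<and> compact (middle_hedgehog K)) \<and>
         (\<forall>K. strictly_convex_body K \<longrightarrow>
            (\<forall>e>0. \<exists>d>0. \<forall>L. strictly_convex_body L \<and> hausdorff_dist K L < d \<longrightarrow>
               hausdorff_dist (middle_hedgehog K) (middle_hedgehog L) < e))"
proof (intro conjI allI impI)
  fix K assume K: "strictly_convex_body K"
  show "middle_hedgehog K \<noteq> {}" by (simp add: middle_hedgehog_def)
  show "compact (middle_hedgehog K)" unfolding middle_hedgehog_def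
    by (rule compact_continuous_image[OF mid_cont[OF K]]) simp
next
  fix K and e :: real assume K: "strictly_convex_body K" and e: "e > 0"
  obtain d where d: "d > 0" "\<forall>L. strictly_convex_body L \<and> hausdorff_dist K L < d \<longrightarrow>
            (\<forall>v\<in>sphere 0 1. dist (support_point L v) (support_point K v) < e/4)"
    using lemmaB[OF K, of "e/4"] e by auto
  show "\<exists>d>0. \<forall>L. strictly_convex_body L \<and> hausdorff_dist K L < d \<longrightarrow>
               hausdorff_dist (middle_hedgehog K) (middle_hedgehog L) < e"
  proof (intro exI[of _ d] conjI d(1) allI impI)
    fix L assume H: "strictly_convex_body L \<and> hausdorff_dist K L < d"
    have S: "\<forall>v\<in>sphere 0 1. dist (support_point L v) (support_point K v) < e/4" using d(2) H by blast
    have "\<forall>u\<in>sphere 0 1. dist (mid_point K u) (mid_point L u) \<le> e/4"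
    proof
      fix u :: "real^2" assume u: "u \<in> sphere 0 1"
      have mu: "- u \<in> sphere 0 1" using u by simp
      have "dist (mid_point K u) (mid_point L u) \<le>
         (dist (support_point K u) (support_point L u) + dist (support_point K (-u)) (support_point L (-u))) / 2"
        unfolding mid_point_def by (rule midpt_dist)
      also have "\<dots> \<le> e/4"
      proof -
        have "dist (support_point K u) (support_point L u) < e/4" using S u by (simp add: dist_commute)
        moreover have "dist (support_point K (-u)) (support_point L (-u)) < e/4"
          using S mu by (metis dist_commute)
        ultimately show ?thesis by (simp add: field_simps)
      qed
      finally show "dist (mid_point K u) (mid_point L u) \<le> e/4" .
    qed
    hence "hausdorff_dist (middle_hedgehog K) (middle_hedgehog L) \<le> e/4"
      unfolding middle_hedgehog_def by (intro hd_le) auto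
    thus "hausdorff_dist (middle_hedgehog K) (middle_hedgehog L) < e" using e by linarith
  qed
qed

end
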